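(* Let $n\ge 2$ and let $A$, $B$ be $n$-dimensional boxes with closed side lengths $a_1\le\dots\le a_n$ and $b_1\le\dots\le b_n$. Suppose that $A$, in some state, fits inside $B$ in its closed state, and that $B$, in some state, fits inside $A$ in some state $\sigma$. Then in the state $\sigma$ the box $A$ is expanded along a side of closed length $a_1$ (its smallest side), and the expanded length exceeds all other side lengths of $A$, i.e. the expanded smallest side becomes the largest side of $A$.
   Context: A state of an $n$-dimensional box $A$ with closed side lengths $a_1\le\dots\le a_n$ is either closed or expanded along one side $i$: $a_i$ is replaced by $a_i'$ with $a_i\le a_i'\le 2a_i$, other sides unchanged (only one side can expand). The dimension vector of a state is its multiset of side lengths sorted in non-decreasing order. A box $X$ in some state fits inside a box $Y$ in some state if each coordinate of the dimension vector of $Y$ is strictly larger than the corresponding coordinate of that of $X$. *)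

theory Defs
  imports Complex_Main
begin

text \<open>A box is given by the list of its closed side lengths (sorted, positive).
  A state is either closed, or expanded along side i (0-based) to length x.\<close>

datatype box_state = Closed | Expanded nat real

definition valid_state :: "real list \<Rightarrow> box_state \<Rightarrow> bool" where
  "valid_state a s = (case s of
      Closed \<Rightarrow> True
    | Expanded i x \<Rightarrow> i < length a \<and> a ! i \<le> x \<and> x \<le> 2 * a ! i)"

definition dimvec :: "real list \<Rightarrow> box_state \<Rightarrow> real list" where
  "dimvec a s = sort (case s of Closed \<Rightarrow> a | Expanded i x \<Rightarrow> a[i := x])"

definition fits :: "real list \<Rightarrow> real list \<Rightarrow> bool" where
  "fits u v = (length u = length v \<and> (\<forall>k < length u. u ! k < v ! k))"

end

theory Submission
  imports Defs
begin

lemma sorted_first_le: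
  fixes ys :: "real list"
  assumes "sorted ys" "y \<in> set ys" shows "ys ! 0 \<le> y"
proof -
  obtain k where "k < length ys" "ys ! k = y" using assms(2) by (auto simp: in_set_conv_nth)
  thus ?thesis using assms(1) by (metis le0 sorted_nth_mono)
qed

lemma sorted_last_ge:
  fixes ys :: "real list"
  assumes "sorted ys" "y \<in> set ys" shows "y \<le> ys ! (length ys - 1)"
proof -
  obtain k where "k < length ys" "ys ! k = y" using assms(2) by (auto simp: in_set_conv_nth)
  moreover have "k \<le> length ys - 1" using \<open>k < length ys\<close> by simp
  moreover have "length ys - 1 < length ys" using \<open>k < length ys\<close> by simp
  ultimately show ?thesis using assms(1) sorted_nth_mono by blast
qed

lemma sort_first_le:
  fixes xs :: "real list"
  assumes "y \<in> set xs" shows "sort xs ! 0 \<le> y"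
  using sorted_first_le[of "sort xs" y] assms by simp

lemma sort_last_ge:
  fixes xs :: "real list"
  assumes "y \<in> set xs" shows "y \<le> sort xs ! (length xs - 1)"
  using sorted_last_ge[of "sort xs" y] assms by simp

lemma sort_first_in:
  fixes xs :: "real list"
  assumes "xs \<noteq> []" shows "sort xs ! 0 \<in> set xs"
proof -
  have "sort xs ! 0 \<in> set (sort xs)" using assms
    by (metis length_greater_0_conv length_sort nth_mem)
  thus ?thesis by simp
qed

lemma sort_last_in:
  fixes xs :: "real list"
  assumes "xs \<noteq> []" shows "sort xs ! (length xs - 1) \<in> set xs"
proof -
  have "sort xs ! (length xs - 1) \<in> set (sort xs)" using assms
    by (metis diff_less length_greater_0_conv length_sort nth_mem zero_less_one)
  thus ?thesis by simp
qed

lemma dimvec_len: "valid_state a s \<Longrightarrow> length (dimvec a s) = length a"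
  by (auto simp: dimvec_def split: box_state.splits)

lemma dimvec_bounds:
  fixes a :: "real list"
  assumes "sorted a" "a \<noteq> []" "valid_state a s"
  shows "a ! 0 \<le> dimvec a s ! 0 \<and> a ! (length a - 1) \<le> dimvec a s ! (length a - 1)"
proof (cases s)
  case Closed
  then show ?thesis using assms by (simp add: dimvec_def sorted_sort_id)
next
  case (Expanded i x)
  have v: "i < length a" "a ! i \<le> x" using assms Expanded by (auto simp: valid_state_def)
  let ?l = "a[i := x]"
  have ne: "?l \<noteq> []" using assms by simp
  have "dimvec a s ! 0 \<in> set ?l" using sort_first_in[OF ne] Expanded by (simp add: dimvec_def)
  then obtain k where k: "k < length a" "?l ! k = dimvec a s ! 0" by (auto simp: in_set_conv_nth)
  have "a ! 0 \<le> ?l ! k"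
  proof (cases "k = i")
    case True thus ?thesis using v k assms(1) sorted_first_le[OF assms(1), of "a!i"] by simp
  next
    case False
    have "a ! k \<in> set a" using k by simp
    thus ?thesis using False sorted_first_le[OF assms(1), of "a!k"] by simp
  qed
  moreover have "a ! (length a - 1) \<le> dimvec a s ! (length a - 1)"
  proof (cases "i = length a - 1")
    case True
    have "x \<in> set ?l" using v by (simp add: set_update_memI)
    hence "x \<le> dimvec a s ! (length a - 1)" using sort_last_ge[of x ?l] Expanded by (simp add: dimvec_def)
    thus ?thesis using v True by simp
  next
    case False
    have "a ! (length a - 1) \<in> set ?l" using False assms(2)
      by (metis diff_less length_greater_0_conv length_list_update nth_list_update_neq nth_mem zero_less_one)
    thus ?thesis using sort_last_ge[of _ ?l] Expanded by (simp add: dimvec_def)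
  qed
  ultimately show ?thesis using k by simp
qed

theorem lemma8:
  fixes n :: nat and a b :: "real list" and \<sigma> :: box_state
  assumes "n \<ge> 2"
    and "length a = n" and "length b = n"
    and "sorted a" and "sorted b"
    and "\<forall>x \<in> set a. 0 < x" and "\<forall>x \<in> set b. 0 < x"
    and "\<exists>s. valid_state a s \<and> fits (dimvec a s) (dimvec b Closed)"
    and "\<exists>t. valid_state b t \<and> fits (dimvec b t) (dimvec a \<sigma>)"
    and "valid_state a \<sigma>"
  shows "\<exists>i x. \<sigma> = Expanded i x \<and> a ! i = a ! 0 \<and> (\<forall>j < n. j \<noteq> i \<longrightarrow> a ! j < x)"
proof -
  obtain s where s: "valid_state a s" "fits (dimvec a s) (dimvec b Closed)" using assms(8) by blast
  obtain t where t: "valid_state b t" "fits (dimvec b t) (dimvec a \<sigma>)" using assms(9) by blast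
  have ane: "a \<noteq> []" and bne: "b \<noteq> []" using assms(1-3) by auto
  have bc: "dimvec b Closed = b" using assms(5) by (simp add: dimvec_def sorted_sort_id)
  have n0: "0 < n" "n - 1 < n" using assms(1) by auto
  have A1: "a ! 0 \<le> dimvec a s ! 0" "a ! (n - 1) \<le> dimvec a s ! (n - 1)"
    using dimvec_bounds[OF assms(4) ane s(1)] assms(2) by auto
  have B1: "b ! 0 \<le> dimvec b t ! 0" "b ! (n - 1) \<le> dimvec b t ! (n - 1)"
    using dimvec_bounds[OF assms(5) bne t(1)] assms(3) by auto
  have F1: "dimvec a s ! 0 < b ! 0" "dimvec a s ! (n-1) < b ! (n-1)"
    using s(2) n0 dimvec_len[OF s(1)] assms(2) bc unfolding fits_def by auto
  have F2: "dimvec b t ! 0 < dimvec a \<sigma> ! 0" "dimvec b t ! (n-1) < dimvec a \<sigma> ! (n-1)"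
    using t(2) n0 dimvec_len[OF t(1)] assms(3) unfolding fits_def by auto
  have G: "a ! 0 < dimvec a \<sigma> ! 0" "a ! (n-1) < dimvec a \<sigma> ! (n-1)"
    using A1 B1 F1 F2 by linarith+
  show ?thesis
  proof (cases \<sigma>)
    case Closed
    then show ?thesis using G assms(4) by (simp add: dimvec_def sorted_sort_id)
  next
    case (Expanded i x)
    have v: "i < n" "a ! i \<le> x" using assms(10) assms(2) Expanded by (auto simp: valid_state_def)
    let ?l = "a[i := x]"
    have i0: "i = 0"
    proof (rule ccontr)
      assume "i \<noteq> 0"
      hence "a ! 0 \<in> set ?l" using n0 assms(2)
        by (metis length_list_update nth_list_update_neq nth_mem)
      hence "dimvec a \<sigma> ! 0 \<le> a ! 0" using sort_first_le Expanded by (simp add: dimvec_def)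
      thus False using G by simp
    qed
    have "dimvec a \<sigma> ! (n-1) \<in> set ?l" using sort_last_in[of ?l] ane Expanded assms(2)
      by (simp add: dimvec_def)
    then obtain k where k: "k < n" "?l ! k = dimvec a \<sigma> ! (n-1)" using assms(2)
      by (auto simp: in_set_conv_nth)
    have "a ! (n-1) < x"
    proof (cases "k = i")
      case True thus ?thesis using k G v by (simp add: nth_list_update_eq assms(2))
    next
      case False
      hence "?l ! k = a ! k" by simp
      moreover have "a ! k \<le> a ! (n-1)" using sorted_last_ge[OF assms(4), of "a!k"] k assms(2) by simp
      ultimately show ?thesis using k G by simp
    qed
    moreover have "\<forall>j < n. a ! j \<le> a ! (n-1)"
      using sorted_last_ge[OF assms(4)] assms(2) by simp
    ultimately show ?thesis using Expanded i0 by force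
  qed
qed

end
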